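(* Let $q=2^n$, let $B$ be a $k$-subset of $\mathrm{GF}(q)$ with $k\ge 3$, and let $\mathcal B=\mathrm{GA}_1(q)(B)$. For pairwise distinct $u_1,u_2,u_3\in\mathrm{GF}(q)$ define $I_B(u_1,u_2,u_3)=|\{(x,y)\in\mathrm{GF}(q)^2: u_ix+y\in B\ (i=1,2,3)\}|$. Then $(\mathrm{GF}(q),\mathcal B)$ is a $3$-design if and only if $I_B(u_1,u_2,u_3)$ is independent of the specific choice of the pairwise distinct elements $u_1,u_2,u_3$.
   Context: $\mathrm{GA}_1(q)$ is the group of permutations $\pi_{a,b}(x)=ax+b$ of $\mathrm{GF}(q)$ with $(a,b)\in\mathrm{GF}(q)^*\times\mathrm{GF}(q)$; for $B\subseteq\mathrm{GF}(q)$, $\mathrm{GA}_1(q)(B)=\{\pi(B):\pi\in\mathrm{GA}_1(q)\}$ is the orbit of $B$ (a set of $k$-subsets). A pair $(\mathcal P,\mathcal B)$ with $\mathcal B$ a set of $k$-subsets of $\mathcal P$ is a $3$-design if every $3$-subset of $\mathcal P$ is contained in exactly $\lambda$ members of $\mathcal B$, for some constant $\lambda$. *)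

theory Defs
  imports Main
begin

definition GA1_orbit :: "'a::field set \<Rightarrow> 'a set set" where
  "GA1_orbit B = {(\<lambda>x. a * x + b) ` B | a b. a \<noteq> 0}"

definition is_3_design :: "'a set \<Rightarrow> 'a set set \<Rightarrow> nat \<Rightarrow> bool" where
  "is_3_design P Bs k \<longleftrightarrow>
     (\<forall>X\<in>Bs. X \<subseteq> P \<and> card X = k) \<and>
     (\<exists>lam. \<forall>T. T \<subseteq> P \<and> card T = 3 \<longrightarrow> card {X \<in> Bs. T \<subseteq> X} = lam)"

definition I_B :: "'a::field set \<Rightarrow> 'a \<Rightarrow> 'a \<Rightarrow> 'a \<Rightarrow> nat" where
  "I_B B u1 u2 u3 = card {(x, y). u1 * x + y \<in> B \<and> u2 * x + y \<in> B \<and> u3 * x + y \<in> B}"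

end

theory Submission
  imports Defs
begin

definition aff :: "'a::field \<times> 'a \<Rightarrow> 'a \<Rightarrow> 'a" where
  "aff g x = fst g * x + snd g"

lemma orbit_eq: "GA1_orbit B = (\<lambda>g. aff g ` B) ` {g. fst g \<noteq> 0}"
proof
  show "GA1_orbit B \<subseteq> (\<lambda>g. aff g ` B) ` {g. fst g \<noteq> 0}"
  proof
    fix X assume "X \<in> GA1_orbit B"
    then obtain a b where "a \<noteq> 0" "X = (\<lambda>x. a * x + b) ` B" unfolding GA1_orbit_def by auto
    then have "X = aff (a, b) ` B" "fst (a, b) \<noteq> 0" unfolding aff_def by auto
    then show "X \<in> (\<lambda>g. aff g ` B) ` {g. fst g \<noteq> 0}" by blast
  qed
  show "(\<lambda>g. aff g ` B) ` {g. fst g \<noteq> 0} \<subseteq> GA1_orbit B"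
  proof
    fix X assume "X \<in> (\<lambda>g. aff g ` B) ` {g. fst g \<noteq> 0}"
    then obtain g where "fst g \<noteq> 0" "X = aff g ` B" by blast
    then have "X = (\<lambda>x. fst g * x + snd g) ` B" unfolding aff_def by auto
    then show "X \<in> GA1_orbit B" unfolding GA1_orbit_def using \<open>fst g \<noteq> 0\<close> by blast
  qed
qed

lemma fiber_const:
  fixes B :: "'a::{finite,field} set"
  assumes "fst g0 \<noteq> 0"
  shows "card {g. fst g \<noteq> 0 \<and> aff g ` B = aff g0 ` B} = card {g. fst g \<noteq> 0 \<and> aff g ` B = B}"
proof -
  obtain a0 b0 where g0: "g0 = (a0, b0)" by force
  have a0: "a0 \<noteq> 0" using assms g0 by simp
  have img: "aff (a0 * a, a0 * b + b0) ` B = aff g0 ` (aff (a, b) ` B)" for a b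
    unfolding image_image g0 aff_def by (simp add: algebra_simps)
  have img2: "aff (a / a0, (b - b0) / a0) ` B = aff (inverse a0, - b0 / a0) ` (aff (a,b) ` B)" for a b
    unfolding image_image aff_def using a0 by (simp add: field_simps)
  have inv: "aff (inverse a0, - b0 / a0) ` (aff g0 ` B) = B"
    unfolding image_image g0 aff_def using a0 by (simp add: field_simps)
  have "bij_betw (\<lambda>(a,b). (a / a0, (b - b0) / a0))
     {g. fst g \<noteq> 0 \<and> aff g ` B = aff g0 ` B} {g. fst g \<noteq> 0 \<and> aff g ` B = B}"
  proof (rule bij_betw_byWitness[where f' = "\<lambda>(a,b). (a0 * a, a0 * b + b0)"])
    show "\<forall>x\<in>{g. fst g \<noteq> 0 \<and> aff g ` B = aff g0 ` B}.
       (\<lambda>(a, b). (a0 * a, a0 * b + b0)) ((\<lambda>(a, b). (a / a0, (b - b0) / a0)) x) = x"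
      using a0 by auto
    show "\<forall>y\<in>{g. fst g \<noteq> 0 \<and> aff g ` B = B}.
       (\<lambda>(a, b). (a / a0, (b - b0) / a0)) ((\<lambda>(a, b). (a0 * a, a0 * b + b0)) y) = y"
      using a0 by auto
    show "(\<lambda>(a, b). (a / a0, (b - b0) / a0)) ` {g. fst g \<noteq> 0 \<and> aff g ` B = aff g0 ` B}
        \<subseteq> {g. fst g \<noteq> 0 \<and> aff g ` B = B}"
    proof
      fix p assume "p \<in> (\<lambda>(a, b). (a / a0, (b - b0) / a0)) ` {g. fst g \<noteq> 0 \<and> aff g ` B = aff g0 ` B}"
      then obtain g where g: "g \<in> {g. fst g \<noteq> 0 \<and> aff g ` B = aff g0 ` B}" "p = (\<lambda>(a, b). (a / a0, (b - b0) / a0)) g"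
        by blast
      obtain a b where "g = (a, b)" by force
      then have p: "p = (a / a0, (b - b0) / a0)" "a \<noteq> 0" "aff (a, b) ` B = aff g0 ` B" using g by auto
      have "aff p ` B = B" using p img2[of a b] inv by simp
      then show "p \<in> {g. fst g \<noteq> 0 \<and> aff g ` B = B}" using p a0 by simp
    qed
    show "(\<lambda>(a, b). (a0 * a, a0 * b + b0)) ` {g. fst g \<noteq> 0 \<and> aff g ` B = B}
        \<subseteq> {g. fst g \<noteq> 0 \<and> aff g ` B = aff g0 ` B}"
    proof
      fix p assume "p \<in> (\<lambda>(a, b). (a0 * a, a0 * b + b0)) ` {g. fst g \<noteq> 0 \<and> aff g ` B = B}"
      then obtain g where g: "g \<in> {g. fst g \<noteq> 0 \<and> aff g ` B = B}" "p = (\<lambda>(a, b). (a0 * a, a0 * b + b0)) g"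
        by blast
      obtain a b where "g = (a, b)" by force
      then have p: "p = (a0 * a, a0 * b + b0)" "a \<noteq> 0" "aff (a, b) ` B = B" using g by auto
      have "aff p ` B = aff g0 ` B" using p img[of a b] by simp
      then show "p \<in> {g. fst g \<noteq> 0 \<and> aff g ` B = aff g0 ` B}" using p a0 by simp
    qed
  qed
  then show ?thesis by (simp add: bij_betw_same_card)
qed

lemma count_blocks:
  fixes B :: "'a::{finite,field} set" and T :: "'a set"
  defines "s \<equiv> card {g. fst g \<noteq> 0 \<and> aff g ` B = B}"
  shows "card {g. fst g \<noteq> 0 \<and> T \<subseteq> aff g ` B} = s * card {X \<in> GA1_orbit B. T \<subseteq> X}"
proof -
  let ?S = "{g. fst g \<noteq> 0 \<and> T \<subseteq> aff g ` B}"
  let ?Y = "{X \<in> GA1_orbit B. T \<subseteq> X}"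
  have im: "(\<lambda>g. aff g ` B) ` ?S \<subseteq> ?Y" unfolding orbit_eq by auto
  have "card ?S = (\<Sum>X\<in>?Y. card {g \<in> ?S. aff g ` B = X})"
  proof -
    have fin: "finite ?S" "finite ?Y" by simp_all
    have "(\<Sum>X\<in>?Y. \<Sum>g\<in>{g. g \<in> ?S \<and> aff g ` B = X}. (1::nat)) = (\<Sum>g\<in>?S. 1)"
      by (rule sum.group[OF fin im])
    then show ?thesis by simp
  qed
  also have "\<dots> = (\<Sum>X\<in>?Y. s)"
  proof (rule sum.cong)
    fix X assume "X \<in> ?Y"
    then obtain g0 where g0: "fst g0 \<noteq> 0" "X = aff g0 ` B" "T \<subseteq> X"
      unfolding orbit_eq by auto
    have "{g \<in> ?S. aff g ` B = X} = {g. fst g \<noteq> 0 \<and> aff g ` B = aff g0 ` B}"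
      using g0 by auto
    then show "card {g \<in> ?S. aff g ` B = X} = s"
      unfolding s_def using fiber_const[OF g0(1)] by simp
  qed simp
  finally show ?thesis by simp
qed

lemma s_pos:
  fixes B :: "'a::{finite,field} set"
  shows "card {g. fst g \<noteq> 0 \<and> aff g ` B = B} > 0"
proof -
  have "(1, 0) \<in> {g. fst g \<noteq> 0 \<and> aff g ` B = (B::'a set)}" by (simp add: aff_def)
  moreover have "finite {g. fst g \<noteq> 0 \<and> aff g ` B = (B::'a set)}" by simp
  ultimately show ?thesis using card_gt_0_iff by blast
qed

lemma IB_formula:
  fixes B :: "'a::{finite,field} set"
  assumes d: "u1 \<noteq> u2" "u1 \<noteq> u3" "u2 \<noteq> u3"
  shows "I_B B u1 u2 u3 = card B + card {g. fst g \<noteq> 0 \<and> {u1,u2,u3} \<subseteq> aff g ` B}"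
proof -
  let ?P = "{(x, y). u1 * x + y \<in> B \<and> u2 * x + y \<in> B \<and> u3 * x + y \<in> B}"
  let ?Z = "{p \<in> ?P. fst p = 0}"
  let ?N = "{p \<in> ?P. fst p \<noteq> 0}"
  have split: "?P = ?Z \<union> ?N" by auto
  have "card ?P = card ?Z + card ?N"
    by (subst split, rule card_Un_disjoint) auto
  moreover have "?Z = (\<lambda>y. (0, y)) ` B" by auto
  then have "card ?Z = card B" by (simp add: card_image inj_on_def)
  moreover have "bij_betw (\<lambda>(x,y). (inverse x, - y / x)) ?N
      {g. fst g \<noteq> 0 \<and> {u1,u2,u3} \<subseteq> aff g ` B}"
  proof (rule bij_betw_byWitness[where f' = "\<lambda>(x,y). (inverse x, - y / x)"])
    show "\<forall>a\<in>?N. (\<lambda>(x, y). (inverse x, - y / x)) ((\<lambda>(x, y). (inverse x, - y / x)) a) = a"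
      by (auto simp: field_simps)
    show "\<forall>a\<in>{g. fst g \<noteq> 0 \<and> {u1,u2,u3} \<subseteq> aff g ` B}.
       (\<lambda>(x, y). (inverse x, - y / x)) ((\<lambda>(x, y). (inverse x, - y / x)) a) = a"
      by (auto simp: field_simps)
    have key: "u \<in> aff (inverse x, - y / x) ` B \<longleftrightarrow> u * x + y \<in> B" if "x \<noteq> 0" for x y u
    proof
      assume "u \<in> aff (inverse x, - y / x) ` B"
      then obtain b where "b \<in> B" "u = inverse x * b - y / x" by (auto simp: aff_def)
      then show "u * x + y \<in> B" using that by (simp add: field_simps)
    next
      assume h: "u * x + y \<in> B"
      have "u = aff (inverse x, - y / x) (u * x + y)" using that by (simp add: aff_def field_simps)
      then show "u \<in> aff (inverse x, - y / x) ` B" using h by blast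
    qed
    have key2: "u \<in> aff (a, b) ` B \<longleftrightarrow> u * inverse a + - b / a \<in> B" if "a \<noteq> 0" for a b u
    proof
      assume "u \<in> aff (a, b) ` B"
      then obtain c where "c \<in> B" "u = a * c + b" by (auto simp: aff_def)
      then show "u * inverse a + - b / a \<in> B" using that by (simp add: field_simps)
    next
      assume h: "u * inverse a + - b / a \<in> B"
      have "u = aff (a, b) (u * inverse a + - b / a)" using that by (simp add: aff_def field_simps)
      then show "u \<in> aff (a, b) ` B" using h by blast
    qed
    show "(\<lambda>(x, y). (inverse x, - y / x)) ` ?N \<subseteq> {g. fst g \<noteq> 0 \<and> {u1,u2,u3} \<subseteq> aff g ` B}"
      using key by (auto simp: mult.commute)
    show "(\<lambda>(x, y). (inverse x, - y / x)) ` {g. fst g \<noteq> 0 \<and> {u1,u2,u3} \<subseteq> aff g ` B} \<subseteq> ?N"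
      by (auto simp: aff_def field_simps)
  qed
  then have "card ?N = card {g. fst g \<noteq> 0 \<and> {u1,u2,u3} \<subseteq> aff g ` B}"
    by (rule bij_betw_same_card)
  ultimately show ?thesis unfolding I_B_def by simp
qed

theorem lemma7:
  fixes B :: "'a::{finite,field} set" and n k :: nat
  assumes "card (UNIV :: 'a set) = 2 ^ n" and "card B = k" and "k \<ge> 3"
  shows "is_3_design (UNIV :: 'a set) (GA1_orbit B) k \<longleftrightarrow>
         (\<exists>c. \<forall>u1 u2 u3. u1 \<noteq> u2 \<and> u1 \<noteq> u3 \<and> u2 \<noteq> u3 \<longrightarrow> I_B B u1 u2 u3 = c)"
proof -
  define s where "s = card {g. fst g \<noteq> 0 \<and> aff g ` B = B}"
  have spos: "s > 0" unfolding s_def by (rule s_pos)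
  have main: "I_B B u1 u2 u3 = k + s * card {X \<in> GA1_orbit B. {u1,u2,u3} \<subseteq> X}"
    if "u1 \<noteq> u2" "u1 \<noteq> u3" "u2 \<noteq> u3" for u1 u2 u3
  proof -
    have "I_B B u1 u2 u3 = card B + card {g. fst g \<noteq> 0 \<and> {u1,u2,u3} \<subseteq> aff g ` B}"
      by (rule IB_formula[OF that])
    also have "\<dots> = k + s * card {X \<in> GA1_orbit B. {u1,u2,u3} \<subseteq> X}"
      by (simp only: s_def assms(2) count_blocks)
    finally show ?thesis .
  qed
  have blocks: "\<forall>X\<in>GA1_orbit B. X \<subseteq> UNIV \<and> card X = k"
  proof
    fix X assume "X \<in> GA1_orbit B"
    then obtain a b where ab: "a \<noteq> 0" "X = (\<lambda>x. a * x + b) ` B" unfolding GA1_orbit_def by auto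
    have "inj_on (\<lambda>x. a * x + b) B" using ab(1) by (auto simp: inj_on_def)
    then show "X \<subseteq> UNIV \<and> card X = k" using ab assms(2) by (simp add: card_image)
  qed
  show ?thesis
  proof
    assume "is_3_design UNIV (GA1_orbit B) k"
    then obtain lam where lam: "\<And>T. card T = 3 \<Longrightarrow> card {X \<in> GA1_orbit B. T \<subseteq> X} = lam"
      unfolding is_3_design_def by auto
    show "\<exists>c. \<forall>u1 u2 u3. u1 \<noteq> u2 \<and> u1 \<noteq> u3 \<and> u2 \<noteq> u3 \<longrightarrow> I_B B u1 u2 u3 = c"
    proof (intro exI allI impI)
      fix u1 u2 u3 :: 'a assume d: "u1 \<noteq> u2 \<and> u1 \<noteq> u3 \<and> u2 \<noteq> u3"
      then have "card {u1,u2,u3} = 3" by simp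
      then have "card {X \<in> GA1_orbit B. {u1,u2,u3} \<subseteq> X} = lam" by (rule lam)
      then show "I_B B u1 u2 u3 = k + s * lam" using main d by metis
    qed
  next
    assume "\<exists>c. \<forall>u1 u2 u3. u1 \<noteq> u2 \<and> u1 \<noteq> u3 \<and> u2 \<noteq> u3 \<longrightarrow> I_B B u1 u2 u3 = c"
    then obtain c where c: "\<And>u1 u2 u3. u1 \<noteq> u2 \<Longrightarrow> u1 \<noteq> u3 \<Longrightarrow> u2 \<noteq> u3 \<Longrightarrow> I_B B u1 u2 u3 = c"
      by blast
    have "\<forall>T. T \<subseteq> UNIV \<and> card T = 3 \<longrightarrow> card {X \<in> GA1_orbit B. T \<subseteq> X} = (c - k) div s"
    proof (intro allI impI)
      fix T :: "'a set" assume "T \<subseteq> UNIV \<and> card T = 3"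
      then obtain x y z where T: "T = {x,y,z}" "x \<noteq> y" "y \<noteq> z" "x \<noteq> z"
        unfolding card_3_iff by auto
      have "c = k + s * card {X \<in> GA1_orbit B. T \<subseteq> X}"
        using c[of x y z] main[of x y z] T by simp
      then show "card {X \<in> GA1_orbit B. T \<subseteq> X} = (c - k) div s" using spos by simp
    qed
    then show "is_3_design UNIV (GA1_orbit B) k" unfolding is_3_design_def using blocks by blast
  qed
qed

end
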